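(* In the setting of short geodesics, there exists a constant $c>0$, depending only on the metric $h$, such that whenever $0<s\le c$ we have $$\tfrac12\le h^{ij}(x(t),y(t))\eta_i(t)\eta_j(t)\le\tfrac32 \quad\text{for all } t\in[0,\tau(0,y,\sigma_s)].$$
   Context: Gas giant setting. $M$ is a compact manifold with boundary, $\dim M=n\ge 2$, and $g=\rho^{-1}\bar g$ with $\bar g$ smooth up to the boundary and $\rho$ a boundary defining function. Near $\partial M$ there are coordinates $(x,y)$ in which $g=\mathrm{d}x^2+x^{-2}h(x,y,\mathrm{d}y)$, with $h_x$ a family of metrics on $\partial M$ smooth in $x$ up to $x=0$. Dual coordinates are $(\xi,\eta)$. Geodesic flow. $\phi_t$ is the Hamiltonian flow of $H=\tfrac12\xi^2+\tfrac12x^2h^{ij}\eta_i\eta_j$: - $\dot x=\xi$, - $\dot y^i=x^2h^{ij}\eta_j$, - $\dot\xi=-xh^{ij}\eta_i\eta_j-\tfrac12x^2\partial_xh^{ij}\eta_i\eta_j$, - $\dot\eta_i=-\tfrac12x^2\partial_{y^i}h^{kj}\eta_k\eta_j$. Short geodesics. Fix $y\in\partial M$ and $\eta\in T^*_y\partial M$ with $h^{ij}(0,y)\eta_i\eta_j=1$. For $s>0$ let $\sigma_s=(s,\eta)$ and $\gamma_s(t)=\phi_t(0,y,\sigma_s)=(x(t),y(t),\xi(t),\eta(t))$. Here $\tau(0,y,\sigma_s)$ is the first positive time at which $x$ returns to $0$. *)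

theory Defs
  imports "HOL-Analysis.Analysis"
begin

text \<open>Collar coordinates (x,y) near the boundary; y ranges over a coordinate
  space real^'m with CARD('m) = n - 1.  h x y is the matrix of the DUAL
  metric h^{ij}(x,y) of the family h_x.\<close>

definition qf :: "real^'m^'m \<Rightarrow> real^'m \<Rightarrow> real" where
  "qf A v = v \<bullet> (A *v v)"

definition hfun :: "(real \<Rightarrow> real^'m \<Rightarrow> real^'m^'m) \<Rightarrow> (real \<times> (real^'m)) \<Rightarrow> real^'m^'m" where
  "hfun h = (\<lambda>p. h (fst p) (snd p))"

definition dhx :: "(real \<Rightarrow> real^'m \<Rightarrow> real^'m^'m) \<Rightarrow> real \<Rightarrow> real^'m \<Rightarrow> real^'m^'m" where
  "dhx h x y = frechet_derivative (hfun h) (at (x, y)) (1, 0)"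

definition dhy :: "(real \<Rightarrow> real^'m \<Rightarrow> real^'m^'m) \<Rightarrow> 'm \<Rightarrow> real \<Rightarrow> real^'m \<Rightarrow> real^'m^'m" where
  "dhy h i x y = frechet_derivative (hfun h) (at (x, y)) (0, axis i 1)"

text \<open>h is C^1, symmetric, and on the collar strip [0,x0] x real^'m it is uniformly
  positive definite with uniformly bounded entries and first derivatives
  (these are the consequences of smoothness up to x = 0 and compactness of the boundary).\<close>
definition admissible_h :: "(real \<Rightarrow> real^'m \<Rightarrow> real^'m^'m) \<Rightarrow> bool" where
  "admissible_h h \<longleftrightarrow>
     (\<forall>p. hfun h differentiable at p) \<and>
     continuous_on UNIV (\<lambda>p. dhx h (fst p) (snd p)) \<and>
     (\<forall>i. continuous_on UNIV (\<lambda>p. dhy h i (fst p) (snd p))) \<and>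
     (\<forall>x y. transpose (h x y) = h x y) \<and>
     (\<exists>x0 lam K. x0 > 0 \<and> lam > 0 \<and>
        (\<forall>x y. 0 \<le> x \<and> x \<le> x0 \<longrightarrow>
           (\<forall>v. qf (h x y) v \<ge> lam * norm v ^ 2) \<and>
           (\<forall>i j. \<bar>h x y $ i $ j\<bar> \<le> K \<and> \<bar>dhx h x y $ i $ j\<bar> \<le> K \<and>
                  (\<forall>k. \<bar>dhy h k x y $ i $ j\<bar> \<le> K))))"

text \<open>(X,Y,Xi,E) solves Hamilton's equations for H = xi^2/2 + x^2 h^{ij} eta_i eta_j / 2 on [0,T],
  starting at (0, y0, s, eta0), with X > 0 on (0,T), i.e. 0 < T \<le> tau(0,y0,sigma_s).\<close>
definition short_geod_sol ::
  "(real \<Rightarrow> real^'m \<Rightarrow> real^'m^'m) \<Rightarrow> real \<Rightarrow> real^'m \<Rightarrow> real^'m \<Rightarrow> real \<Rightarrow>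
   (real \<Rightarrow> real) \<Rightarrow> (real \<Rightarrow> real^'m) \<Rightarrow> (real \<Rightarrow> real) \<Rightarrow> (real \<Rightarrow> real^'m) \<Rightarrow> bool" where
  "short_geod_sol h s y0 eta0 T X Y Xi E \<longleftrightarrow>
     T > 0 \<and> X 0 = 0 \<and> Y 0 = y0 \<and> Xi 0 = s \<and> E 0 = eta0 \<and>
     (\<forall>t\<in>{0..T}.
        (X has_real_derivative Xi t) (at t within {0..T}) \<and>
        (Y has_vector_derivative ((X t)^2 *\<^sub>R (h (X t) (Y t) *v E t))) (at t within {0..T}) \<and>
        (Xi has_real_derivative
            (- X t * qf (h (X t) (Y t)) (E t) - 1/2 * (X t)^2 * qf (dhx h (X t) (Y t)) (E t)))
          (at t within {0..T}) \<and>
        (E has_vector_derivative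
            (\<chi> i. - 1/2 * (X t)^2 * qf (dhy h i (X t) (Y t)) (E t))) (at t within {0..T})) \<and>
     (\<forall>t. 0 < t \<and> t < T \<longrightarrow> X t > 0)"

end

theory Submission
  imports Defs
begin

lemma hderiv:
  fixes h :: "real \<Rightarrow> real^'m \<Rightarrow> real^'m^'m"
  assumes adm: "\<forall>p. hfun h differentiable at p"
    and dX: "(X has_real_derivative X') (at t within S)"
    and dY: "(Y has_vector_derivative Y') (at t within S)"
  shows "((\<lambda>t. h (X t) (Y t) $ i $ j) has_real_derivative
     (X' * dhx h (X t) (Y t) $ i $ j + (\<Sum>k\<in>UNIV. Y' $ k * dhy h k (X t) (Y t) $ i $ j))) (at t within S)"
proof -
  define L where "L = frechet_derivative (hfun h) (at (X t, Y t))"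
  have L: "(hfun h has_derivative L) (at (X t, Y t))"
    using adm frechet_derivative_works L_def by blast
  have lin: "linear L" using L has_derivative_linear by blast
  have p: "((\<lambda>t. (X t, Y t)) has_vector_derivative (X', Y')) (at t within S)"
    using has_vector_derivative_Pair dX[unfolded has_real_derivative_iff_has_vector_derivative] dY by blast
  have c: "((hfun h \<circ> (\<lambda>t. (X t, Y t))) has_vector_derivative L (X', Y')) (at t within S)"
    by (rule vector_derivative_diff_chain_within[OF p has_derivative_at_withinI[OF L]])
  then have c2: "((\<lambda>t. h (X t) (Y t)) has_vector_derivative L (X', Y')) (at t within S)"
    by (simp add: o_def hfun_def)
  have c3: "((\<lambda>t. h (X t) (Y t) $ i $ j) has_vector_derivative L (X', Y') $ i $ j) (at t within S)"
  proof -
    have bl: "bounded_linear (\<lambda>A::real^'m^'m. A $ i $ j)"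
      using bounded_linear_compose[OF bounded_linear_vec_nth bounded_linear_vec_nth] by auto
    show ?thesis using bounded_linear.has_vector_derivative[OF bl c2] by simp
  qed
  have pe: "(X', Y') = X' *\<^sub>R (1::real, 0::real^'m) + (\<Sum>k\<in>UNIV. Y' $ k *\<^sub>R (0::real, axis k (1::real)))"
  proof -
    have "(\<Sum>k\<in>UNIV. Y' $ k *\<^sub>R (0::real, axis k (1::real))) = (0, \<Sum>k\<in>UNIV. Y' $ k *\<^sub>R axis k 1)"
      by (simp add: prod_eq_iff fst_sum snd_sum)
    also have "(\<Sum>k\<in>UNIV. Y' $ k *\<^sub>R axis k 1) = Y'"
      using basis_expansion[of Y'] by (simp add: scalar_mult_eq_scaleR)
    finally show ?thesis by simp
  qed
  have "L (X', Y') = X' *\<^sub>R L (1, 0) + (\<Sum>k\<in>UNIV. Y' $ k *\<^sub>R L (0, axis k 1))"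
    apply (subst pe)
    by (simp only: linear_add[OF lin] linear_scale[OF lin] linear_sum[OF lin])
  then have "L (X', Y') $ i $ j = X' * dhx h (X t) (Y t) $ i $ j + (\<Sum>k\<in>UNIV. Y' $ k * dhy h k (X t) (Y t) $ i $ j)"
    by (simp add: dhx_def dhy_def L_def sum_component)
  then show ?thesis using c3 by (simp add: has_real_derivative_iff_has_vector_derivative)
qed

lemma qf_sum: "qf A v = (\<Sum>i\<in>UNIV. \<Sum>j\<in>UNIV. v$i * A$i$j * v$j)"
  by (simp add: qf_def inner_vec_def matrix_vector_mult_def sum_distrib_left mult.assoc mult.left_commute)

lemma qderiv:
  fixes h :: "real \<Rightarrow> real^'m \<Rightarrow> real^'m^'m"
  assumes adm: "\<forall>p. hfun h differentiable at p"
    and symm: "\<forall>x y. transpose (h x y) = h x y"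
    and dX: "(X has_real_derivative Xi t) (at t within S)"
    and dY: "(Y has_vector_derivative ((X t)^2 *\<^sub>R (h (X t) (Y t) *v E t))) (at t within S)"
    and dE: "(E has_vector_derivative
            (\<chi> i. - 1/2 * (X t)^2 * qf (dhy h i (X t) (Y t)) (E t))) (at t within S)"
  shows "((\<lambda>t. qf (h (X t) (Y t)) (E t)) has_real_derivative Xi t * qf (dhx h (X t) (Y t)) (E t)) (at t within S)"
proof -
  define H where "H = h (X t) (Y t)"
  define Hx where "Hx = dhx h (X t) (Y t)"
  define Hy where "Hy = (\<lambda>k. dhy h k (X t) (Y t))"
  define e where "e = E t"
  define HE where "HE = (\<lambda>k. \<Sum>l\<in>UNIV. H$k$l * e$l)"
  define Yp where "Yp = (\<lambda>k. (X t)^2 * HE k)"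
  define ep where "ep = (\<lambda>i. - 1/2 * (X t)^2 * qf (Hy i) e)"
  define Hp where "Hp = (\<lambda>i j. Xi t * Hx $ i $ j + (\<Sum>k\<in>UNIV. Yp k * Hy k $ i $ j))"
  have Yp_eq: "(X t)^2 * (h (X t) (Y t) *v E t) $ k = Yp k" for k
    by (simp add: Yp_def HE_def H_def e_def matrix_vector_mult_def)
  have dH: "((\<lambda>t. h (X t) (Y t) $ i $ j) has_real_derivative Hp i j) (at t within S)" for i j
    using hderiv[OF adm dX dY, of i j] by (simp add: Yp_eq Hp_def Hx_def Hy_def)
  have de: "((\<lambda>t. E t $ i) has_real_derivative ep i) (at t within S)" for i
    using bounded_linear.has_vector_derivative[OF bounded_linear_vec_nth dE, of i]
    by (simp add: has_real_derivative_iff_has_vector_derivative ep_def Hy_def e_def)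
  have D: "((\<lambda>t. qf (h (X t) (Y t)) (E t)) has_real_derivative
     (\<Sum>i\<in>UNIV. \<Sum>j\<in>UNIV. (ep i * H$i$j + e$i * Hp i j) * e$j + e$i * H$i$j * ep j)) (at t within S)"
    unfolding qf_sum H_def e_def
  proof (intro DERIV_sum)
    fix i j
    show "((\<lambda>t. E t $ i * h (X t) (Y t) $ i $ j * E t $ j) has_real_derivative
       (ep i * h (X t) (Y t) $ i $ j + E t $ i * Hp i j) * E t $ j + E t $ i * h (X t) (Y t) $ i $ j * ep j) (at t within S)"
      using DERIV_mult[OF DERIV_mult[OF de dH] de, of i i j j] by (simp only: mult.commute)
  qed
  have symH: "H$i$j = H$j$i" for i j
  proof -
    have "H$i$j = transpose H $ j $ i" by (simp add: transpose_def)
    also have "transpose H = H" using symm H_def by simp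
    finally show ?thesis .
  qed
  have S1: "(\<Sum>i\<in>UNIV. \<Sum>j\<in>UNIV. ep i * H$i$j * e$j) = (\<Sum>k\<in>UNIV. ep k * HE k)"
    by (simp add: HE_def sum_distrib_left mult.assoc)
  have S3: "(\<Sum>i\<in>UNIV. \<Sum>j\<in>UNIV. e$i * H$i$j * ep j) = (\<Sum>k\<in>UNIV. ep k * HE k)"
    apply (subst sum.swap)
    unfolding HE_def sum_distrib_left
    apply (rule sum.cong[OF refl])
    apply (rule sum.cong[OF refl])
    subgoal for j i by (simp add: symH[of i j])
    done
  have S2: "(\<Sum>i\<in>UNIV. \<Sum>j\<in>UNIV. e$i * Hp i j * e$j) = Xi t * qf Hx e + (\<Sum>k\<in>UNIV. Yp k * qf (Hy k) e)"
  proof -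
    have pt: "e$i * Hp i j * e$j = Xi t * (e$i * Hx$i$j * e$j) + (\<Sum>k\<in>UNIV. Yp k * (e$i * Hy k$i$j * e$j))" for i j
      by (simp add: Hp_def algebra_simps sum_distrib_left sum_distrib_right)
    have "(\<Sum>i\<in>UNIV. \<Sum>j\<in>UNIV. e$i * Hp i j * e$j) = Xi t * qf Hx e
       + (\<Sum>i\<in>UNIV. \<Sum>j\<in>UNIV. \<Sum>k\<in>UNIV. Yp k * (e$i * Hy k$i$j * e$j))"
      by (simp only: pt sum.distrib qf_sum sum_distrib_left)
    also have "(\<Sum>i\<in>UNIV. \<Sum>j\<in>UNIV. \<Sum>k\<in>UNIV. Yp k * (e$i * Hy k$i$j * e$j))
       = (\<Sum>k\<in>UNIV. Yp k * qf (Hy k) e)"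
    proof -
      have "(\<Sum>i\<in>UNIV. \<Sum>j\<in>UNIV. \<Sum>k\<in>UNIV. Yp k * (e$i * Hy k$i$j * e$j))
         = (\<Sum>i\<in>UNIV. \<Sum>k\<in>UNIV. \<Sum>j\<in>UNIV. Yp k * (e$i * Hy k$i$j * e$j))"
        by (rule sum.cong[OF refl], rule sum.swap)
      also have "\<dots> = (\<Sum>k\<in>UNIV. \<Sum>i\<in>UNIV. \<Sum>j\<in>UNIV. Yp k * (e$i * Hy k$i$j * e$j))"
        by (rule sum.swap)
      also have "\<dots> = (\<Sum>k\<in>UNIV. Yp k * qf (Hy k) e)"
        by (simp only: qf_sum sum_distrib_left)
      finally show ?thesis .
    qed
    finally show ?thesis .
  qed
  have S0: "(\<Sum>k\<in>UNIV. ep k * HE k) + (\<Sum>k\<in>UNIV. ep k * HE k) + (\<Sum>k\<in>UNIV. Yp k * qf (Hy k) e) = 0"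
  proof -
    have "(\<Sum>k\<in>UNIV. ep k * HE k) + (\<Sum>k\<in>UNIV. ep k * HE k) + (\<Sum>k\<in>UNIV. Yp k * qf (Hy k) e)
       = (\<Sum>k\<in>UNIV. ep k * HE k + ep k * HE k + Yp k * qf (Hy k) e)"
      by (simp only: sum.distrib)
    also have "\<dots> = 0"
      by (rule sum.neutral) (simp add: ep_def Yp_def algebra_simps)
    finally show ?thesis .
  qed
  have "(\<Sum>i\<in>UNIV. \<Sum>j\<in>UNIV. (ep i * H$i$j + e$i * Hp i j) * e$j + e$i * H$i$j * ep j)
      = (\<Sum>i\<in>UNIV. \<Sum>j\<in>UNIV. ep i * H$i$j * e$j + e$i * Hp i j * e$j + e$i * H$i$j * ep j)"
    by (simp only: distrib_right)
  also have "\<dots> = (\<Sum>i\<in>UNIV. \<Sum>j\<in>UNIV. ep i * H$i$j * e$j) + (\<Sum>i\<in>UNIV. \<Sum>j\<in>UNIV. e$i * Hp i j * e$j)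
        + (\<Sum>i\<in>UNIV. \<Sum>j\<in>UNIV. e$i * H$i$j * ep j)"
    by (simp only: sum.distrib)
  also have "\<dots> = Xi t * qf Hx e" using S0 S1 S2 S3 by simp
  finally show ?thesis using D by (simp add: Hx_def e_def)
qed

lemma incr:
  fixes f f' :: "real \<Rightarrow> real"
  assumes ab: "a \<le> b" and sub: "0 \<le> a" "b \<le> T"
    and d: "\<forall>x\<in>{0..T}. (f has_real_derivative f' x) (at x within {0..T})"
    and pos: "\<And>x. a < x \<Longrightarrow> x < b \<Longrightarrow> 0 \<le> f' x"
  shows "f a \<le> f b"
proof (rule DERIV_nonneg_imp_increasing_open[OF ab])
  fix x assume x: "a < x" "x < b"
  have "x \<in> interior {0..T}" using x sub by auto
  then have "at x within {0..T} = at x" by (rule at_within_interior)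
  moreover have "x \<in> {0..T}" using x sub by auto
  ultimately have "(f has_real_derivative f' x) (at x)" using d by metis
  then show "\<exists>y. (f has_real_derivative y) (at x) \<and> 0 \<le> y" using pos x by blast
next
  show "continuous_on {a..b} f"
  proof (rule DERIV_continuous_on)
    fix x assume xab: "x \<in> {a..b}"
    have x0T: "x \<in> {0..T}" using xab sub by auto
    have ss: "{a..b} \<subseteq> {0..T}" using sub by auto
    show "(f has_real_derivative f' x) (at x within {a..b})"
      by (rule has_field_derivative_subset[OF bspec[OF d x0T] ss])
  qed
qed

lemma qf_bound:
  fixes A :: "real^'m^'m"
  assumes "\<forall>i j. \<bar>A$i$j\<bar> \<le> K"
  shows "\<bar>qf A v\<bar> \<le> real CARD('m)^2 * K * norm v ^ 2"
proof -
  have "\<bar>qf A v\<bar> \<le> (\<Sum>i\<in>UNIV. \<Sum>j\<in>UNIV. \<bar>v$i * A$i$j * v$j\<bar>)"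
    unfolding qf_sum by (rule order_trans[OF sum_abs]) (intro sum_mono sum_abs)
  also have "\<dots> \<le> (\<Sum>i::'m\<in>UNIV. \<Sum>j::'m\<in>UNIV. K * norm v ^ 2)"
  proof (rule sum_mono, rule sum_mono)
    fix i j
    have K0: "0 \<le> K" using assms[rule_format, of i j] by linarith
    have "\<bar>v$i * A$i$j * v$j\<bar> = \<bar>A$i$j\<bar> * (\<bar>v$i\<bar> * \<bar>v$j\<bar>)" by (simp add: abs_mult)
    also have "\<dots> \<le> K * (norm v * norm v)"
      by (intro mult_mono assms[rule_format] component_le_norm_cart K0 abs_ge_zero norm_ge_zero mult_nonneg_nonneg)
    finally show "\<bar>v$i * A$i$j * v$j\<bar> \<le> K * norm v ^ 2" by (simp add: power2_eq_square)
  qed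
  also have "\<dots> = real CARD('m)^2 * K * norm v ^ 2" by (simp add: power2_eq_square)
  finally show ?thesis .
qed

lemma core:
  fixes h :: "real \<Rightarrow> real^'m \<Rightarrow> real^'m^'m"
  assumes hd: "\<forall>p. hfun h differentiable at p"
    and symm: "\<forall>x y. transpose (h x y) = h x y"
    and x0: "x0 > 0" and lam: "lam > 0"
    and bnd: "\<forall>x y. 0 \<le> x \<and> x \<le> x0 \<longrightarrow> (\<forall>v. qf (h x y) v \<ge> lam * norm v ^ 2) \<and> (\<forall>i j. \<bar>dhx h x y $ i $ j\<bar> \<le> K)"
    and C_def: "C = real CARD('m)^2 * K / lam"
    and s: "0 < s" "s \<le> x0/2" "s * C \<le> 1/36"
    and q0: "qf (h 0 y0) eta0 = 1"
    and sol: "short_geod_sol h s y0 eta0 T X Y Xi E"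
  shows "\<forall>t\<in>{0..T}. 1/2 \<le> qf (h (X t) (Y t)) (E t) \<and> qf (h (X t) (Y t)) (E t) \<le> 3/2"
proof -
  define q where "q = (\<lambda>t. qf (h (X t) (Y t)) (E t))"
  define Dx where "Dx = (\<lambda>t. qf (dhx h (X t) (Y t)) (E t))"
  have T: "T > 0" and X0: "X 0 = 0" and Y0: "Y 0 = y0" and Xi0: "Xi 0 = s" and E0: "E 0 = eta0"
    using sol unfolding short_geod_sol_def by auto
  have Xpos: "\<And>t. 0 < t \<Longrightarrow> t < T \<Longrightarrow> X t > 0"
    using sol unfolding short_geod_sol_def by auto
  have ders: "\<forall>t\<in>{0..T}.
        (X has_real_derivative Xi t) (at t within {0..T}) \<and>
        (Y has_vector_derivative ((X t)^2 *\<^sub>R (h (X t) (Y t) *v E t))) (at t within {0..T}) \<and>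
        (Xi has_real_derivative
            (- X t * qf (h (X t) (Y t)) (E t) - 1/2 * (X t)^2 * qf (dhx h (X t) (Y t)) (E t)))
          (at t within {0..T}) \<and>
        (E has_vector_derivative
            (\<chi> i. - 1/2 * (X t)^2 * qf (dhy h i (X t) (Y t)) (E t))) (at t within {0..T})"
    using sol unfolding short_geod_sol_def by blast
  have dX: "\<forall>t\<in>{0..T}. (X has_real_derivative Xi t) (at t within {0..T})" using ders by blast
  have dXi: "\<forall>t\<in>{0..T}. (Xi has_real_derivative (- X t * q t - 1/2 * (X t)^2 * Dx t)) (at t within {0..T})"
    using ders unfolding q_def Dx_def by blast
  have dq: "\<forall>t\<in>{0..T}. (q has_real_derivative Xi t * Dx t) (at t within {0..T})"
  proof
    fix t assume t: "t \<in> {0..T}"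
    show "(q has_real_derivative Xi t * Dx t) (at t within {0..T})"
      unfolding q_def Dx_def
      by (rule qderiv[OF hd symm]) (use ders t in blast)+
  qed
  have q0': "q 0 = 1" using q0 X0 Y0 E0 by (simp add: q_def)
  have K0: "0 \<le> K"
  proof -
    have "0 \<le> (0::real) \<and> 0 \<le> x0" using x0 by simp
    then have "\<bar>dhx h 0 y0 $ i $ i\<bar> \<le> K" for i using bnd by blast
    then show ?thesis by (meson abs_ge_zero order.trans)
  qed
  have C0: "0 \<le> C" unfolding C_def using K0 lam by simp
  have contq: "continuous_on {0..T} q" by (rule DERIV_continuous_on) (use dq in blast)
  have contXi: "continuous_on {0..T} Xi" by (rule DERIV_continuous_on) (use dXi in blast)
  \<comment> \<open>energy conservation\<close>
  define F where "F = (\<lambda>t. Xi t * Xi t + X t * X t * q t)"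
  have dF: "\<forall>t\<in>{0..T}. (F has_real_derivative 0) (at t within {0..T})"
  proof
    fix t assume t: "t \<in> {0..T}"
    show "(F has_real_derivative 0) (at t within {0..T})"
      unfolding F_def
      apply (rule DERIV_cong[OF DERIV_add[OF DERIV_mult[OF bspec[OF dXi t] bspec[OF dXi t]]
                   DERIV_mult[OF DERIV_mult[OF bspec[OF dX t] bspec[OF dX t]] bspec[OF dq t]]]])
      by (simp add: algebra_simps power2_eq_square)
  qed
  have dmF: "\<forall>t\<in>{0..T}. ((\<lambda>t. - F t) has_real_derivative - 0) (at t within {0..T})"
    using dF by (blast intro: DERIV_minus)
  have energy: "\<And>t. t \<in> {0..T} \<Longrightarrow> Xi t ^ 2 + X t ^ 2 * q t = s ^ 2"
  proof -
    fix t assume t: "t \<in> {0..T}"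
    have "F 0 \<le> F t" by (rule incr[OF _ _ _ dF]) (use t in auto)
    moreover have "- F 0 \<le> - F t" by (rule incr[OF _ _ _ dmF]) (use t in auto)
    ultimately have "F t = F 0" by linarith
    then show "Xi t ^ 2 + X t ^ 2 * q t = s ^ 2" by (simp add: F_def X0 Xi0 power2_eq_square)
  qed
  define C' where "C' = 3/2 * C"
  have C'0: "0 \<le> C'" using C0 by (simp add: C'_def)
  have B: "\<forall>u\<in>{0..t0}. \<bar>q u - 1\<bar> \<le> 1/4"
    if t0: "t0 \<in> {0..T}" and hyp: "\<forall>u\<in>{0..t0}. \<bar>q u - 1\<bar> \<le> 1/2" for t0
  proof -
    have Xb: "\<bar>X u\<bar> \<le> 2 * s" if u: "u \<in> {0..t0}" for u
    proof -
      have uT: "u \<in> {0..T}" using u t0 by auto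
      have "\<bar>q u - 1\<bar> \<le> 1/2" using hyp u by blast
      then have qu: "1/2 \<le> q u" by linarith
      have "X u ^ 2 * q u \<le> s ^ 2" using energy[OF uT] by (smt (verit) zero_le_power2)
      moreover have "X u ^ 2 * (1/2) \<le> X u ^ 2 * q u" using qu by (intro mult_left_mono) auto
      moreover have "(2 * s) ^ 2 = 4 * s ^ 2" by (simp add: power_mult_distrib)
      moreover have "0 \<le> s ^ 2" by simp
      ultimately have "X u ^ 2 \<le> (2 * s) ^ 2" by linarith
      then have "\<bar>X u\<bar> \<le> \<bar>2 * s\<bar>" using abs_le_square_iff by blast
      then show ?thesis using s(1) by simp
    qed
    have CX: "\<bar>C' * X u\<bar> \<le> 1/12" if u: "u \<in> {0..t0}" for u
    proof -
      have "\<bar>C' * X u\<bar> = C' * \<bar>X u\<bar>" using C'0 by (simp add: abs_mult)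
      also have "\<dots> \<le> C' * (2 * s)" using Xb[OF u] C'0 by (intro mult_left_mono) auto
      also have "\<dots> = 3 * (s * C)" by (simp add: C'_def)
      also have "\<dots> \<le> 1/12" using s(3) by simp
      finally show ?thesis .
    qed
    have inner: "0 < X u \<and> \<bar>Dx u\<bar> \<le> C * q u \<and> \<bar>Dx u\<bar> \<le> C'" if u: "0 < u" "u < t0" for u
    proof -
      have Xu: "0 < X u" using Xpos u t0 by auto
      have Xu2: "X u \<le> x0" using Xb[of u] u s(2) by auto
      have b1: "\<forall>v. qf (h (X u) (Y u)) v \<ge> lam * norm v ^ 2" and b2: "\<forall>i j. \<bar>dhx h (X u) (Y u) $ i $ j\<bar> \<le> K"
        using bnd Xu Xu2 by auto
      have "\<bar>Dx u\<bar> \<le> real CARD('m)^2 * K * norm (E u) ^ 2"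
        unfolding Dx_def by (rule qf_bound[OF b2])
      also have "\<dots> \<le> real CARD('m)^2 * K * (q u / lam)"
      proof (rule mult_left_mono)
        show "norm (E u) ^ 2 \<le> q u / lam" using b1[rule_format, of "E u"] lam
          by (simp add: q_def field_simps mult.commute)
        show "0 \<le> real CARD('m)^2 * K" using K0 by simp
      qed
      also have "\<dots> = C * q u" by (simp add: C_def)
      finally have D1: "\<bar>Dx u\<bar> \<le> C * q u" .
      have "\<bar>q u - 1\<bar> \<le> 1/2" using hyp u by auto
      then have "q u \<le> 3/2" by linarith
      then have "C * q u \<le> C * (3/2)" using C0 by (rule mult_left_mono)
      then have "C * q u \<le> C'" unfolding C'_def by simp
      then show ?thesis using D1 Xu by linarith
    qed
    have dXi_np: "- X u * q u - 1/2 * (X u)^2 * Dx u \<le> 0" if u: "0 < u" "u < t0" for u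
    proof -
      have Xu: "0 < X u" and D1: "\<bar>Dx u\<bar> \<le> C * q u" using inner[OF u] by auto
      have "\<bar>q u - 1\<bar> \<le> 1/2" using hyp u by auto
      then have qu: "0 \<le> q u" by linarith
      have XC: "X u * C \<le> 1"
      proof -
        have "X u * C \<le> (2 * s) * C" using Xb[of u] u C0 by (intro mult_right_mono) auto
        then show ?thesis using s(3) by simp
      qed
      have "\<bar>1/2 * (X u)^2 * Dx u\<bar> \<le> 1/2 * (X u)^2 * (C * q u)"
        using D1 by (simp add: abs_mult mult_left_mono)
      also have "\<dots> = 1/2 * (X u * C) * (X u * q u)" by (simp add: power2_eq_square)
      also have "\<dots> \<le> 1/2 * 1 * (X u * q u)"
        using XC Xu qu by (intro mult_right_mono mult_left_mono) auto
      finally have "\<bar>1/2 * (X u)^2 * Dx u\<bar> \<le> 1/2 * (X u * q u)" by simp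
      moreover have "0 \<le> X u * q u" using Xu qu by simp
      moreover have "- X u * q u = - (X u * q u)" by simp
      ultimately show ?thesis unfolding abs_le_iff by linarith
    qed
    have Xi_mono: "Xi b \<le> Xi a" if ab: "0 \<le> a" "a \<le> b" "b \<le> t0" for a b
    proof -
      have d: "\<forall>t\<in>{0..T}. ((\<lambda>t. - Xi t) has_real_derivative - (- X t * q t - 1/2 * (X t)^2 * Dx t)) (at t within {0..T})"
        using dXi by (blast intro: DERIV_minus)
      have "- Xi a \<le> - Xi b"
      proof (rule incr[OF ab(2) ab(1) _ d])
        show "b \<le> T" using ab t0 by auto
        fix x assume "a < x" "x < b"
        then have "0 < x" "x < t0" using ab by auto
        from dXi_np[OF this] show "0 \<le> - (- X x * q x - 1/2 * (X x)^2 * Dx x)" by linarith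
      qed
      then show ?thesis by simp
    qed
    have P1: "q b - C' * X b \<le> q a - C' * X a \<and> q a + C' * X a \<le> q b + C' * X b"
      if ab: "0 \<le> a" "a \<le> b" "b \<le> t0" and sg: "\<And>w. a < w \<Longrightarrow> w < b \<Longrightarrow> 0 \<le> Xi w" for a b
    proof
      have d1: "\<forall>t\<in>{0..T}. ((\<lambda>t. - (q t - C' * X t)) has_real_derivative - (Xi t * Dx t - C' * Xi t)) (at t within {0..T})"
        using dq dX by (auto intro!: DERIV_minus DERIV_diff DERIV_cmult)
      have "- (q a - C' * X a) \<le> - (q b - C' * X b)"
      proof (rule incr[OF ab(2) ab(1) _ d1])
        show "b \<le> T" using ab t0 by auto
        fix w assume w: "a < w" "w < b"
        then have "0 < w" "w < t0" using ab by auto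
        then have "\<bar>Dx w\<bar> \<le> C'" using inner by blast
        moreover have "0 \<le> Xi w" using sg w by blast
        ultimately have "0 \<le> Xi w * (C' - Dx w)" by (intro mult_nonneg_nonneg) auto
        then show "0 \<le> - (Xi w * Dx w - C' * Xi w)" by (simp add: algebra_simps)
      qed
      then show "q b - C' * X b \<le> q a - C' * X a" by simp
      have d2: "\<forall>t\<in>{0..T}. ((\<lambda>t. q t + C' * X t) has_real_derivative (Xi t * Dx t + C' * Xi t)) (at t within {0..T})"
        using dq dX by (auto intro!: DERIV_add DERIV_cmult)
      show "q a + C' * X a \<le> q b + C' * X b"
      proof (rule incr[OF ab(2) ab(1) _ d2])
        show "b \<le> T" using ab t0 by auto
        fix w assume w: "a < w" "w < b"
        then have "0 < w" "w < t0" using ab by auto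
        then have "\<bar>Dx w\<bar> \<le> C'" using inner by blast
        moreover have "0 \<le> Xi w" using sg w by blast
        ultimately have "0 \<le> Xi w * (C' + Dx w)" by (intro mult_nonneg_nonneg) auto
        then show "0 \<le> Xi w * Dx w + C' * Xi w" by (simp add: algebra_simps)
      qed
    qed
    have P2: "q a - C' * X a \<le> q b - C' * X b \<and> q b + C' * X b \<le> q a + C' * X a"
      if ab: "0 \<le> a" "a \<le> b" "b \<le> t0" and sg: "\<And>w. a < w \<Longrightarrow> w < b \<Longrightarrow> Xi w \<le> 0" for a b
    proof
      have d1: "\<forall>t\<in>{0..T}. ((\<lambda>t. q t - C' * X t) has_real_derivative (Xi t * Dx t - C' * Xi t)) (at t within {0..T})"
        using dq dX by (auto intro!: DERIV_diff DERIV_cmult)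
      show "q a - C' * X a \<le> q b - C' * X b"
      proof (rule incr[OF ab(2) ab(1) _ d1])
        show "b \<le> T" using ab t0 by auto
        fix w assume w: "a < w" "w < b"
        then have "0 < w" "w < t0" using ab by auto
        then have "\<bar>Dx w\<bar> \<le> C'" using inner by blast
        moreover have "0 \<le> - Xi w" using sg w by force
        ultimately have "0 \<le> (- Xi w) * (C' - Dx w)" by (intro mult_nonneg_nonneg) auto
        then show "0 \<le> Xi w * Dx w - C' * Xi w" by (simp add: algebra_simps)
      qed
      have d2: "\<forall>t\<in>{0..T}. ((\<lambda>t. - (q t + C' * X t)) has_real_derivative - (Xi t * Dx t + C' * Xi t)) (at t within {0..T})"
      proof
        fix t assume t: "t \<in> {0..T}"
        show "((\<lambda>t. - (q t + C' * X t)) has_real_derivative - (Xi t * Dx t + C' * Xi t)) (at t within {0..T})"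
          by (intro DERIV_minus DERIV_add DERIV_cmult bspec[OF dq t] bspec[OF dX t])
      qed
      have "- (q a + C' * X a) \<le> - (q b + C' * X b)"
      proof (rule incr[OF ab(2) ab(1) _ d2])
        show "b \<le> T" using ab t0 by auto
        fix w assume w: "a < w" "w < b"
        then have "0 < w" "w < t0" using ab by auto
        then have "\<bar>Dx w\<bar> \<le> C'" using inner by blast
        moreover have "0 \<le> - Xi w" using sg w by force
        ultimately have "0 \<le> (- Xi w) * (C' + Dx w)" by (intro mult_nonneg_nonneg) auto
        then show "0 \<le> - (Xi w * Dx w + C' * Xi w)" by (simp add: algebra_simps)
      qed
      then show "q b + C' * X b \<le> q a + C' * X a" by simp
    qed
    show ?thesis
    proof
      fix u assume u: "u \<in> {0..t0}"
      have X0': "C' * X 0 = 0" using X0 by simp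
      show "\<bar>q u - 1\<bar> \<le> 1/4"
      proof (cases "0 \<le> Xi u")
        case True
        have "0 \<le> Xi w" if "0 < w" "w < u" for w
          using Xi_mono[of w u] that u True by auto
        then have "q u - C' * X u \<le> q 0 - C' * X 0 \<and> q 0 + C' * X 0 \<le> q u + C' * X u"
          using P1[of 0 u] u by auto
        then show ?thesis unfolding abs_le_iff
          using q0' X0' abs_le_D1[OF CX[OF u]] abs_le_D2[OF CX[OF u]] by (intro conjI; linarith)
      next
        case False
        have cXi: "continuous_on {0..u} Xi" using contXi u t0 by (auto intro: continuous_on_subset)
        obtain t1 where t1: "0 \<le> t1" "t1 \<le> u" "Xi t1 = 0"
          using IVT2'[of Xi u 0 0, OF _ _ _ cXi] False Xi0 s(1) u by auto
        have "0 \<le> Xi w" if "0 < w" "w < t1" for w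
          using Xi_mono[of w t1] that t1 u by auto
        then have A1: "q t1 - C' * X t1 \<le> q 0 - C' * X 0 \<and> q 0 + C' * X 0 \<le> q t1 + C' * X t1"
          using P1[of 0 t1] u t1 by auto
        have "Xi w \<le> 0" if "t1 < w" "w < u" for w
          using Xi_mono[of t1 w] that t1 u by auto
        then have A2: "q t1 - C' * X t1 \<le> q u - C' * X u \<and> q u + C' * X u \<le> q t1 + C' * X t1"
          using P2[of t1 u] u t1 by auto
        have t1u: "t1 \<in> {0..t0}" using t1 u by auto
        show ?thesis unfolding abs_le_iff
          using A1 A2 q0' X0' abs_le_D1[OF CX[OF u]] abs_le_D2[OF CX[OF u]]
            abs_le_D1[OF CX[OF t1u]] abs_le_D2[OF CX[OF t1u]] by (intro conjI; linarith)
      qed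
    qed
  qed
  show ?thesis
  proof (rule ccontr)
    assume "\<not> ?thesis"
    then obtain tb where tb: "tb \<in> {0..T}" "\<not> (1/2 \<le> q tb \<and> q tb \<le> 3/2)" unfolding q_def by blast
    define S where "S = {0..T} \<inter> (\<lambda>u. \<bar>q u - 1\<bar>) -` {1/3..}"
    have Sne: "tb \<in> S" using tb by (auto simp: S_def)
    have ca: "continuous_on {0..T} (\<lambda>u. \<bar>q u - 1\<bar>)"
      by (intro continuous_on_rabs continuous_on_diff contq continuous_on_const)
    have cl: "closed S" unfolding S_def
      by (rule continuous_closed_preimage[OF ca]) auto
    have bdd: "bdd_below S" unfolding S_def by (rule bdd_belowI[of _ 0]) auto
    define ts where "ts = Inf S"
    have tsS: "ts \<in> S" using closed_contains_Inf[OF _ bdd cl] Sne ts_def by auto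
    have ts: "0 \<le> ts" "ts \<le> T" "\<bar>q ts - 1\<bar> \<ge> 1/3" using tsS by (auto simp: S_def)
    have below: "\<bar>q u - 1\<bar> < 1/3" if "0 \<le> u" "u < ts" for u
    proof (rule ccontr)
      assume "\<not> ?thesis" then have "u \<in> S" using that ts by (auto simp: S_def)
      then have "ts \<le> u" unfolding ts_def using bdd by (rule cInf_lower)
      then show False using that by simp
    qed
    have quart: "\<bar>q u - 1\<bar> \<le> 1/4" if u: "0 \<le> u" "u < ts" for u
    proof -
      have uT: "u \<in> {0..T}" using u ts by auto
      have "\<forall>w\<in>{0..u}. \<bar>q w - 1\<bar> \<le> 1/2"
      proof
        fix w assume "w \<in> {0..u}"
        then have "\<bar>q w - 1\<bar> < 1/3" using below u by auto
        then show "\<bar>q w - 1\<bar> \<le> 1/2" by simp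
      qed
      then have "\<forall>w\<in>{0..u}. \<bar>q w - 1\<bar> \<le> 1/4" using B[OF uT] by blast
      then show ?thesis using u by auto
    qed
    have tsT: "ts \<in> {0..T}" using ts by auto
    obtain d where d: "d > 0" "\<forall>x'\<in>{0..T}. dist x' ts < d \<longrightarrow> dist (q x') (q ts) < 1/12"
      using contq tsT unfolding continuous_on_iff
      by (metis divide_pos_pos zero_less_numeral zero_less_one)
    have ts0: "0 < ts"
    proof (rule ccontr)
      assume "\<not> 0 < ts" then have "ts = 0" using ts by simp
      then show False using ts(3) q0' by simp
    qed
    define u where "u = max 0 (ts - d/2)"
    have u: "0 \<le> u" "u < ts" "u \<in> {0..T}" "dist u ts < d"
      using ts0 d(1) ts by (auto simp: u_def dist_real_def)
    then have "dist (q u) (q ts) < 1/12" using d(2) by blast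
    then have "\<bar>q u - q ts\<bar> < 1/12" by (simp add: dist_real_def)
    moreover have "\<bar>q u - 1\<bar> \<le> 1/4" using quart u by blast
    ultimately show False using ts(3) by linarith
  qed
qed

theorem lemma5p4:
  fixes h :: "real \<Rightarrow> real^'m \<Rightarrow> real^'m^'m"
  assumes "admissible_h h"
  shows "\<exists>c>0. \<forall>s y0 eta0 T X Y Xi E.
           0 < s \<and> s \<le> c \<and> qf (h 0 y0) eta0 = 1 \<and>
           short_geod_sol h s y0 eta0 T X Y Xi E \<longrightarrow>
           (\<forall>t\<in>{0..T}. 1/2 \<le> qf (h (X t) (Y t)) (E t) \<and> qf (h (X t) (Y t)) (E t) \<le> 3/2)"
proof -
  have hd: "\<forall>p. hfun h differentiable at p" and symm: "\<forall>x y. transpose (h x y) = h x y"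
    using assms unfolding admissible_h_def by blast+
  obtain x0 lam K where x0: "x0 > 0" and lam: "lam > 0" and
    B: "\<forall>x y. 0 \<le> x \<and> x \<le> x0 \<longrightarrow>
           (\<forall>v. qf (h x y) v \<ge> lam * norm v ^ 2) \<and>
           (\<forall>i j. \<bar>h x y $ i $ j\<bar> \<le> K \<and> \<bar>dhx h x y $ i $ j\<bar> \<le> K \<and>
                  (\<forall>k. \<bar>dhy h k x y $ i $ j\<bar> \<le> K))"
    using assms unfolding admissible_h_def by blast
  have bnd: "\<forall>x y. 0 \<le> x \<and> x \<le> x0 \<longrightarrow> (\<forall>v. qf (h x y) v \<ge> lam * norm v ^ 2) \<and> (\<forall>i j. \<bar>dhx h x y $ i $ j\<bar> \<le> K)"
    using B by blast
  define C where "C = real CARD('m)^2 * K / lam"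
  have K0: "0 \<le> K"
  proof -
    have "0 \<le> (0::real) \<and> 0 \<le> x0" using x0 by simp
    then have "\<bar>dhx h 0 undefined $ i $ i\<bar> \<le> K" for i using bnd by blast
    then show ?thesis by (meson abs_ge_zero order.trans)
  qed
  have C0: "0 \<le> C" unfolding C_def using K0 lam by simp
  define c where "c = min (x0/2) (1 / (36 * C + 36))"
  have c0: "c > 0" using x0 C0 by (simp add: c_def)
  show ?thesis
  proof (intro exI[of _ c] conjI allI impI c0)
    fix s y0 eta0 T X Y Xi E
    assume H: "0 < s \<and> s \<le> c \<and> qf (h 0 y0) eta0 = 1 \<and> short_geod_sol h s y0 eta0 T X Y Xi E"
    have s2: "s \<le> x0/2" using H by (simp add: c_def)
    have "s \<le> 1 / (36 * C + 36)" using H by (simp add: c_def)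
    then have "s * (36 * C + 36) \<le> 1" using C0 by (simp add: field_simps)
    then have s3: "s * C \<le> 1/36" using H by (simp add: algebra_simps)
    show "\<forall>t\<in>{0..T}. 1/2 \<le> qf (h (X t) (Y t)) (E t) \<and> qf (h (X t) (Y t)) (E t) \<le> 3/2"
      by (rule core[OF hd symm x0 lam bnd C_def]) (use H s2 s3 in auto)
  qed
qed

end
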